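(* Let $c\in\mathbb{C}(t)$, $c\notin\{0,1,t\}$, with homogeneous lift $C$, and let $F_1=(P_1,Q_1)$, $d$ and $G_C$ be as in the context. Then $$G_C(1,0)=\frac1d\log|P_1(1,0)|,\qquad G_C(0,1)=\frac1d\log|P_1(0,1)|,\qquad G_C(1,1)=\frac1d\log|P_1(1,1)-Q_1(1,1)|.$$
   Context: $F_{t_1,t_2}(z,w)=\big((t_1w^2-t_2z^2)^2,\;4t_2zw(w-z)(t_1w-t_2z)\big)$. $C=(c_1,c_2)$ is a pair of coprime homogeneous polynomials in $(t_1,t_2)$ of equal degree with $c(t)=c_1(t,1)/c_2(t,1)$. $F_1=F_{t_1,t_2}(C)/\gcd(F_{t_1,t_2}(C))=(P_1,Q_1)$ (dividing by the gcd of the two coordinates), $d=\deg F_1$, $F_{n+1}=F_{t_1,t_2}(F_n)/t_2^2$ (substitution of the coordinates of $F_n$ for $(z,w)$), and $G_C(t_1,t_2)=\lim_{n\to\infty}\frac{1}{4^{n-1}d}\log\max\{|\cdot|,|\cdot|\}$ of $F_n(t_1,t_2)$, the locally uniform limit on $\mathbb{C}^2\setminus\{(0,0)\}$. *)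

theory Defs
  imports Complex_Main "HOL-Computational_Algebra.Polynomial_Factorial"
    "HOL-Computational_Algebra.Fraction_Field" "HOL-Computational_Algebra.Field_as_Ring"
begin

text \<open>Bivariate polynomials in (t1,t2) are represented as complex poly poly:
 the outer variable is t2, the coefficients are polynomials in t1.\<close>

definition T1 :: "complex poly poly" where "T1 = [:[:0, 1:]:]"
definition T2 :: "complex poly poly" where "T2 = [:0, 1:]"

definition ev2 :: "complex poly poly \<Rightarrow> complex \<Rightarrow> complex \<Rightarrow> complex" where
  "ev2 P a b = poly (poly P [:b:]) a"

definition homogeneous :: "complex poly poly \<Rightarrow> nat \<Rightarrow> bool" where
  "homogeneous P m \<longleftrightarrow> (\<forall>i j. coeff (coeff P j) i \<noteq> 0 \<longrightarrow> i + j = m)"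

definition tdeg :: "complex poly poly \<Rightarrow> nat" where
  "tdeg P = Max ({i + j | i j. coeff (coeff P j) i \<noteq> 0} \<union> {0})"

definition Fmap :: "complex poly poly \<times> complex poly poly \<Rightarrow> complex poly poly \<times> complex poly poly" where
  "Fmap zw = (let z = fst zw; w = snd zw in
     ((T1 * w^2 - T2 * z^2)^2, 4 * T2 * z * w * (w - z) * (T1 * w - T2 * z)))"

definition F1 :: "complex poly poly \<Rightarrow> complex poly poly \<Rightarrow> complex poly poly \<times> complex poly poly" where
  "F1 c1 c2 = (let AB = Fmap (c1, c2); g = gcd (fst AB) (snd AB) in
     (fst AB div g, snd AB div g))"

text \<open>Fit c1 c2 n = F_{n+1}.\<close>
fun Fit :: "complex poly poly \<Rightarrow> complex poly poly \<Rightarrow> nat \<Rightarrow> complex poly poly \<times> complex poly poly" where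
  "Fit c1 c2 0 = F1 c1 c2"
| "Fit c1 c2 (Suc n) = (let AB = Fmap (Fit c1 c2 n) in (fst AB div T2^2, snd AB div T2^2))"

definition degF1 :: "complex poly poly \<Rightarrow> complex poly poly \<Rightarrow> nat" where
  "degF1 c1 c2 = max (tdeg (fst (F1 c1 c2))) (tdeg (snd (F1 c1 c2)))"

text \<open>Gapprox c1 c2 n a b = (1/(4^n d)) log max(|P_{n+1}(a,b)|,|Q_{n+1}(a,b)|);
  G_C is its limit as n tends to infinity.\<close>
definition Gapprox :: "complex poly poly \<Rightarrow> complex poly poly \<Rightarrow> nat \<Rightarrow> complex \<Rightarrow> complex \<Rightarrow> real" where
  "Gapprox c1 c2 n a b =
     ln (max (cmod (ev2 (fst (Fit c1 c2 n)) a b)) (cmod (ev2 (snd (Fit c1 c2 n)) a b)))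
     / (4 ^ n * real (degF1 c1 c2))"

end

theory Submission
  imports Defs
begin

lemma ev2_simps:
 "ev2 (p*q) a b = ev2 p a b * ev2 q a b" "ev2 (p+q) a b = ev2 p a b + ev2 q a b"
 "ev2 (p-q) a b = ev2 p a b - ev2 q a b" "ev2 (p^k) a b = ev2 p a b ^ k"
 "ev2 (numeral n) a b = numeral n" "ev2 T1 a b = a" "ev2 T2 a b = b"
  by (simp_all add: ev2_def T1_def T2_def)

lemma T2_dvd_iff: "T2 dvd p \<longleftrightarrow> poly p 0 = 0"
  using dvd_iff_poly_eq_0[of 0 p] by (simp add: T2_def)

lemma prime_T2: "prime_elem T2"
proof -
  have "\<not> is_unit T2" by (simp add: T2_dvd_iff)
  moreover have "T2 \<noteq> 0" by (simp add: T2_def)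
  ultimately show ?thesis unfolding prime_elem_def by (auto simp: T2_dvd_iff)
qed



lemma T2_not_dvd_T1: "\<not> T2 dvd T1"
  by (simp add: T2_dvd_iff T1_def)

lemma prime_pow_dvd_cancel:
  assumes "T2 ^ k dvd g * q" "\<not> T2 dvd q"
  shows "T2 ^ k dvd g"
proof -
  have "coprime T2 q" using prime_T2 assms(2) prime_elem_imp_coprime by blast
  hence "coprime (T2^k) q" by simp
  thus ?thesis using assms(1) coprime_dvd_mult_left_iff by blast
qed

lemma T2_dvd_Q1:
  assumes cop: "coprime c1 c2"
  shows "T2 dvd snd (F1 c1 c2)"
proof (rule ccontr)
  assume nd: "\<not> T2 dvd snd (F1 c1 c2)"
  define P where "P = (T1 * c2^2 - T2 * c1^2)^2"
  define Q where "Q = 4 * T2 * c1 * c2 * (c2 - c1) * (T1 * c2 - T2 * c1)"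
  define g where "g = gcd P Q"
  have F: "F1 c1 c2 = (P div g, Q div g)"
    by (simp add: F1_def Fmap_def P_def Q_def g_def Let_def)
  have Qg: "Q = g * (Q div g)" using g_def by simp
  have gP: "g dvd P" using g_def by simp
  have ndq: "\<not> T2 dvd Q div g" using nd F by simp
  show False
  proof (cases "T2 dvd c2")
    case False
    have "T2 ^ 1 dvd Q" unfolding Q_def by simp
    hence "T2^1 dvd g" using prime_pow_dvd_cancel ndq Qg by metis
    hence "T2 dvd P" using gP by (metis power_one_right dvd_trans)
    hence "T2 dvd T1 * c2^2 - T2 * c1^2" unfolding P_def
      using prime_T2 prime_elem_dvd_power by blast
    hence "T2 dvd T1 * c2^2" by (metis dvd_add_right_iff dvd_triv_left diff_add_cancel)
    hence "T2 dvd T1 \<or> T2 dvd c2" using prime_T2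
      by (metis prime_elem_dvd_mult_iff prime_elem_dvd_power)
    thus False using False T2_not_dvd_T1 by blast
  next
    case True
    then obtain e where e: "c2 = T2 * e" by blast
    have "Q = T2^3 * (4 * c1 * e * (c2 - c1) * (T1 * e - c1))"
      unfolding Q_def e by (simp add: algebra_simps power3_eq_cube)
    hence "T2 ^ 3 dvd Q" by simp
    hence "T2^3 dvd g" using prime_pow_dvd_cancel ndq Qg by metis
    hence d3: "T2^3 dvd P" using gP by (metis dvd_trans)
    have "P = T2^2 * (T1 * T2 * e^2 - c1^2)^2"
      unfolding P_def e by (simp add: algebra_simps power2_eq_square)
    hence "T2^2 * T2 dvd T2^2 * (T1 * T2 * e^2 - c1^2)^2" using d3
      by (simp add: power3_eq_cube power2_eq_square mult.assoc)
    hence "T2 dvd (T1 * T2 * e^2 - c1^2)^2"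
      by (subst (asm) dvd_mult_cancel_left) (simp add: T2_def)
    hence "T2 dvd T1 * T2 * e^2 - c1^2" using prime_T2 prime_elem_dvd_power by blast
    moreover have "T2 dvd T1 * T2 * e^2" by simp
    ultimately have "T2 dvd T1 * T2 * e^2 - (T1 * T2 * e^2 - c1^2)" using dvd_diff by blast
    hence "T2 dvd c1^2" by simp
    hence "T2 dvd c1" using prime_T2 prime_elem_dvd_power by blast
    hence "is_unit T2" using cop True coprime_common_divisor by blast
    thus False using prime_T2 prime_elem_not_unit by blast
  qed
qed

lemma Fit_step:
  assumes "snd (Fit c1 c2 n) = T2 * Q'"
  shows "Fit c1 c2 (Suc n) = ((T1 * T2 * Q'^2 - (fst (Fit c1 c2 n))^2)^2,
          4 * T2 * fst (Fit c1 c2 n) * Q' * (T2 * Q' - fst (Fit c1 c2 n)) * (T1 * Q' - fst (Fit c1 c2 n)))"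
proof -
  define P where "P = fst (Fit c1 c2 n)"
  have nz: "T2^2 \<noteq> (0::complex poly poly)" by (simp add: T2_def)
  have a: "(T1 * (T2*Q')^2 - T2 * P^2)^2 = T2^2 * (T1 * T2 * Q'^2 - P^2)^2"
    by (simp add: algebra_simps power2_eq_square)
  have b: "4 * T2 * P * (T2*Q') * (T2*Q' - P) * (T1 * (T2*Q') - T2 * P)
       = T2^2 * (4 * T2 * P * Q' * (T2 * Q' - P) * (T1 * Q' - P))"
    by (simp add: algebra_simps power2_eq_square)
  have e: "Fit c1 c2 n = (P, T2 * Q')" using assms by (simp add: P_def prod_eq_iff)
  have "Fit c1 c2 (Suc n) = ((T1 * (T2*Q')^2 - T2 * P^2)^2 div T2^2,
      (4 * T2 * P * (T2*Q') * (T2*Q' - P) * (T1 * (T2*Q') - T2 * P)) div T2^2)"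
    by (simp only: Fit.simps e Fmap_def Let_def fst_conv snd_conv)
  also have "\<dots> = ((T1 * T2 * Q'^2 - P^2)^2, 4 * T2 * P * Q' * (T2 * Q' - P) * (T1 * Q' - P))"
    unfolding a b using nz by (metis nonzero_mult_div_cancel_left)
  finally show ?thesis unfolding P_def .
qed

lemma Fit_inv:
  assumes "coprime c1 c2"
  shows "T2 dvd snd (Fit c1 c2 n)"
proof (induction n)
  case 0 thus ?case using T2_dvd_Q1[OF assms] by simp
next
  case (Suc n)
  then obtain Q' where "snd (Fit c1 c2 n) = T2 * Q'" by blast
  from Fit_step[OF this] show ?case by simp
qed




lemma inv_pow_zero: "(\<lambda>n. C / (k::real) ^ n) \<longlonglongrightarrow> 0" if "k > 1" for C
proof -
  have "(\<lambda>n. (1/k) ^ n) \<longlonglongrightarrow> 0" using that by (intro LIMSEQ_realpow_zero) auto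
  hence "(\<lambda>n. C * (1/k) ^ n) \<longlonglongrightarrow> C * 0" by (intro tendsto_mult) auto
  thus ?thesis by (simp add: power_one_over)
qed

lemma growth:
  fixes x :: "nat \<Rightarrow> complex" and y :: "nat \<Rightarrow> real" and c K d :: real
  assumes xs: "\<And>n. x (Suc n) = x n ^ 4" and y0: "\<And>n. y n \<ge> 0" and c: "c > 0"
    and cy: "\<And>n. c * cmod (x n) \<le> y n" and K: "K > 0"
    and ys: "\<And>n. y (Suc n) \<le> K * (y n)^2 * (cmod (x n))^2"
  shows "(\<lambda>n. ln (y n) / (4^n * d)) \<longlonglongrightarrow> ln (cmod (x 0)) / d"
proof (cases "x 0 = 0")
  case True
  have xz: "x n = 0" for n using True by (induction n) (auto simp: xs)
  have "y (Suc n) = 0" for n using ys[of n] y0[of "Suc n"] xz[of n] by simp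
  hence "(\<lambda>n. ln (y (Suc n)) / (4^(Suc n) * d)) \<longlonglongrightarrow> ln (cmod (x 0)) / d"
    using True by simp
  thus ?thesis by (rule LIMSEQ_imp_Suc)
next
  case False
  define a where "a = cmod (x 0)"
  have a: "a > 0" using False a_def by simp
  have xn: "cmod (x n) = a ^ (4^n)" for n
    by (induction n) (simp_all add: a_def xs norm_power power_mult[symmetric] mult.commute)
  have xpos: "cmod (x n) > 0" for n using xn a by simp
  define M where "M n = y n / cmod (x n)" for n
  have Mc: "M n \<ge> c" for n using cy[of n] xpos[of n] by (simp add: M_def field_simps)
  have Mpos: "M n > 0" for n using Mc[of n] c by linarith
  have MS: "M (Suc n) \<le> K * (M n)^2" for n
  proof -
    have "M (Suc n) = y (Suc n) / cmod (x n) ^ 4" by (simp add: M_def xs norm_power)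
    also have "\<dots> \<le> K * (y n)^2 * (cmod (x n))^2 / cmod (x n) ^ 4"
      using ys[of n] xpos[of n] by (simp add: divide_right_mono)
    also have "\<dots> = K * (M n)^2" using xpos[of n]
      by (simp add: M_def field_simps power2_eq_square power4_eq_xxxx)
    finally show ?thesis .
  qed
  define L where "L n = ln (M n)" for n
  have LS: "L (Suc n) \<le> ln K + 2 * L n" for n
  proof -
    have "L (Suc n) \<le> ln (K * (M n)^2)" unfolding L_def
      using MS[of n] Mpos[of n] Mpos[of "Suc n"] K by (subst ln_le_cancel_iff) auto
    also have "\<dots> = ln K + 2 * L n" using K Mpos[of n]
      by (simp add: ln_mult ln_realpow L_def)
    finally show ?thesis .
  qed
  define A where "A = L 0 + ln K"
  have Lup: "L n + ln K \<le> 2^n * A" for n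
  proof (induction n)
    case 0 thus ?case by (simp add: A_def)
  next
    case (Suc n) thus ?case using LS[of n] by simp
  qed
  have Llo: "ln c \<le> L n" for n unfolding L_def using Mc[of n] c by (subst ln_le_cancel_iff) auto
  have lim0: "(\<lambda>n. L n / 4^n) \<longlonglongrightarrow> 0"
  proof (rule real_tendsto_sandwich)
    show "\<forall>\<^sub>F n in sequentially. ln c / 4^n \<le> L n / 4^n"
      using Llo by (intro always_eventually allI divide_right_mono) auto
    show "\<forall>\<^sub>F n in sequentially. L n / 4^n \<le> A / 2^n - ln K / 4^n"
    proof (intro always_eventually allI)
      fix n
      have "L n / 4^n \<le> (2^n * A - ln K) / 4^n" using Lup[of n] by (intro divide_right_mono) auto
      also have "\<dots> = A / 2^n - ln K / 4^n"
      proof -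
        have "(4::real)^n = 2^n * 2^n" by (simp add: power_mult_distrib[symmetric])
        thus ?thesis by (simp add: diff_divide_distrib)
      qed
      finally show "L n / 4^n \<le> A / 2^n - ln K / 4^n" .
    qed
    show "(\<lambda>n. ln c / 4^n) \<longlonglongrightarrow> (0::real)" by (rule inv_pow_zero) simp
    have "(\<lambda>n. A / 2^n - ln K / 4^n) \<longlonglongrightarrow> (0::real) - 0"
      by (intro tendsto_diff inv_pow_zero) auto
    thus "(\<lambda>n. A / 2^n - ln K / 4^n) \<longlonglongrightarrow> (0::real)" by simp
  qed
  have eq: "ln (y n) / (4^n * d) = ln a / d + (L n / 4^n) / d" for n
  proof -
    have "y n = cmod (x n) * M n" using xpos[of n] by (simp add: M_def)
    hence "ln (y n) = 4^n * ln a + L n"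
      using xpos[of n] Mpos[of n] a by (simp add: ln_mult L_def xn ln_realpow)
    thus ?thesis by (simp add: add_divide_distrib)
  qed
  have l2: "(\<lambda>n. (L n / 4^n) / d) \<longlonglongrightarrow> 0"
    using tendsto_mult[OF lim0 tendsto_const[of "inverse d"]] by (simp add: divide_inverse)
  have "(\<lambda>n. ln a / d + (L n / 4^n) / d) \<longlonglongrightarrow> ln a / d + 0"
    by (intro tendsto_add tendsto_const l2)
  thus ?thesis unfolding eq a_def by simp
qed



lemma b01: fixes p q :: complex
  shows "max (cmod (p^4)) (cmod (4*p*q*(q-p)*(0-p))) \<le> 8 * (max (cmod p) (cmod q))^2 * (cmod p)^2"
proof -
  define y where "y = max (cmod p) (cmod q)"
  have py: "cmod p \<le> y" and qy: "cmod q \<le> y" by (auto simp: y_def)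
  have dy: "cmod (q - p) \<le> 2*y" using norm_triangle_ineq4[of q p] py qy by linarith
  have y0: "0 \<le> y" using py norm_ge_zero order_trans by blast
  have "cmod (p^4) = (cmod p)^2 * (cmod p)^2" by (simp add: norm_mult power4_eq_xxxx power2_eq_square)
  also have "\<dots> \<le> y^2 * (cmod p)^2" using py by (intro mult_right_mono power_mono) auto
  also have "\<dots> \<le> 8 * y^2 * (cmod p)^2" by (simp add: mult_right_mono)
  finally have 1: "cmod (p^4) \<le> 8 * y^2 * (cmod p)^2" .
  have "cmod (4*p*q*(q-p)*(0-p)) = 4 * (cmod p)^2 * (cmod q * cmod (q-p))"
    by (simp add: norm_mult power2_eq_square)
  also have "\<dots> \<le> 4 * (cmod p)^2 * (y * (2*y))"
    using qy dy y0 by (intro mult_left_mono mult_mono) auto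
  also have "\<dots> = 8 * y^2 * (cmod p)^2" by (simp add: power2_eq_square)
  finally have 2: "cmod (4*p*q*(q-p)*(0-p)) \<le> 8 * y^2 * (cmod p)^2" .
  show ?thesis using 1 2 by (simp add: y_def)
qed

lemma b11: fixes p q :: complex
  shows "max (cmod ((q^2 - p^2)^2)) (cmod (4*p*q*(q-p)*(q-p))) \<le> 4 * (max (cmod p) (cmod q))^2 * (cmod (p - q))^2"
proof -
  define y where "y = max (cmod p) (cmod q)"
  have py: "cmod p \<le> y" and qy: "cmod q \<le> y" by (auto simp: y_def)
  have sy: "cmod (q + p) \<le> 2*y" using norm_triangle_ineq[of q p] py qy by linarith
  have y0: "0 \<le> y" using py norm_ge_zero order_trans by blast
  have e: "cmod (q - p) = cmod (p - q)" by (rule norm_minus_commute)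
  have "(q^2 - p^2)^2 = (q+p)^2 * (q-p)^2" by (simp add: power2_eq_square algebra_simps)
  hence "cmod ((q^2 - p^2)^2) = (cmod (q+p))^2 * (cmod (p-q))^2" by (simp add: norm_mult norm_power e)
  also have "\<dots> \<le> (2*y)^2 * (cmod (p-q))^2" using sy by (intro mult_right_mono power_mono) auto
  also have "\<dots> = 4 * y^2 * (cmod (p-q))^2" by (simp add: power2_eq_square)
  finally have 1: "cmod ((q^2 - p^2)^2) \<le> 4 * y^2 * (cmod (p-q))^2" .
  have "cmod (4*p*q*(q-p)*(q-p)) = 4 * (cmod p * cmod q) * (cmod (p-q))^2"
    by (simp add: norm_mult power2_eq_square e)
  also have "\<dots> \<le> 4 * (y * y) * (cmod (p-q))^2"
    using py qy y0 by (intro mult_right_mono mult_left_mono mult_mono) auto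
  also have "\<dots> = 4 * y^2 * (cmod (p-q))^2" by (simp add: power2_eq_square)
  finally have 2: "cmod (4*p*q*(q-p)*(q-p)) \<le> 4 * y^2 * (cmod (p-q))^2" .
  show ?thesis using 1 2 by (simp add: y_def)
qed

lemma b11low: fixes p q :: complex shows "1/2 * cmod (p - q) \<le> max (cmod p) (cmod q)"
  using norm_triangle_ineq4[of p q] by linarith



theorem proposition4p1:
  fixes c :: "complex poly fract" and c1 c2 :: "complex poly poly" and m :: nat
  assumes "homogeneous c1 m" and "homogeneous c2 m"
    and "coprime c1 c2" and "c2 \<noteq> 0"
    and "c = Fract (poly c1 1) (poly c2 1)"
    and "c \<notin> {0, 1, Fract [:0, 1:] 1}"
  shows "((\<lambda>n. Gapprox c1 c2 n 1 0) \<longlonglongrightarrow>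
            ln (cmod (ev2 (fst (F1 c1 c2)) 1 0)) / real (degF1 c1 c2)) \<and>
         ((\<lambda>n. Gapprox c1 c2 n 0 1) \<longlonglongrightarrow>
            ln (cmod (ev2 (fst (F1 c1 c2)) 0 1)) / real (degF1 c1 c2)) \<and>
         ((\<lambda>n. Gapprox c1 c2 n 1 1) \<longlonglongrightarrow>
            ln (cmod (ev2 (fst (F1 c1 c2)) 1 1 - ev2 (snd (F1 c1 c2)) 1 1)) / real (degF1 c1 c2))"
proof -
  have "\<forall>n. \<exists>r. snd (Fit c1 c2 n) = T2 * r" using Fit_inv[OF assms(3)] by (metis dvd_def)
  then obtain Q' where Q': "\<And>n. snd (Fit c1 c2 n) = T2 * Q' n" by metis
  define p where "p a b n = ev2 (fst (Fit c1 c2 n)) a b" for a b n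
  define q where "q a b n = ev2 (snd (Fit c1 c2 n)) a b" for a b n
  define r where "r a b n = ev2 (Q' n) a b" for a b n
  have qr: "q a b n = b * r a b n" for a b n by (simp add: q_def r_def Q' ev2_simps)
  have pS: "p a b (Suc n) = (a * b * (r a b n)^2 - (p a b n)^2)^2" for a b n
    unfolding p_def r_def Fit_step[OF Q'] by (simp add: ev2_simps)
  have qS: "q a b (Suc n) = 4 * b * p a b n * r a b n * (b * r a b n - p a b n) * (a * r a b n - p a b n)" for a b n
    unfolding p_def q_def r_def Fit_step[OF Q'] by (simp add: ev2_simps)
  define d where "d = real (degF1 c1 c2)"
  have G: "Gapprox c1 c2 n a b = ln (max (cmod (p a b n)) (cmod (q a b n))) / (4^n * d)" for n a b
    by (simp add: Gapprox_def p_def q_def d_def)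
  have L1: "(\<lambda>n. Gapprox c1 c2 n 1 0) \<longlonglongrightarrow> ln (cmod (p 1 0 0)) / d"
    unfolding G
  proof (rule growth[where c=1 and K=1])
    fix n
    show "p 1 0 (Suc n) = p 1 0 n ^ 4" by (simp add: pS)
    show "0 \<le> max (cmod (p 1 0 n)) (cmod (q 1 0 n))" by (rule order_trans[OF norm_ge_zero max.cobounded1])
    show "1 * cmod (p 1 0 n) \<le> max (cmod (p 1 0 n)) (cmod (q 1 0 n))" by simp
    have "max (cmod (p 1 0 (Suc n))) (cmod (q 1 0 (Suc n))) = (cmod (p 1 0 n))^2 * (cmod (p 1 0 n))^2"
      by (simp add: pS qS norm_mult power4_eq_xxxx power2_eq_square)
    also have "\<dots> \<le> 1 * (max (cmod (p 1 0 n)) (cmod (q 1 0 n)))^2 * (cmod (p 1 0 n))^2"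
      unfolding mult_1_left by (rule mult_right_mono[OF power_mono[OF max.cobounded1 norm_ge_zero] zero_le_power2])
    finally show "max (cmod (p 1 0 (Suc n))) (cmod (q 1 0 (Suc n)))
        \<le> 1 * (max (cmod (p 1 0 n)) (cmod (q 1 0 n)))^2 * (cmod (p 1 0 n))^2" .
  qed auto
  have L2: "(\<lambda>n. Gapprox c1 c2 n 0 1) \<longlonglongrightarrow> ln (cmod (p 0 1 0)) / d"
    unfolding G
  proof (rule growth[where c=1 and K=8])
    fix n
    show "p 0 1 (Suc n) = p 0 1 n ^ 4" by (simp add: pS)
    show "0 \<le> max (cmod (p 0 1 n)) (cmod (q 0 1 n))" by (rule order_trans[OF norm_ge_zero max.cobounded1])
    show "1 * cmod (p 0 1 n) \<le> max (cmod (p 0 1 n)) (cmod (q 0 1 n))" by simp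
    have e1: "p 0 1 (Suc n) = (p 0 1 n)^4" by (simp add: pS)
    have e2: "q 0 1 (Suc n) = 4 * p 0 1 n * q 0 1 n * (q 0 1 n - p 0 1 n) * (0 - p 0 1 n)"
      by (simp add: qS qr[of _ _ n])
    show "max (cmod (p 0 1 (Suc n))) (cmod (q 0 1 (Suc n)))
        \<le> 8 * (max (cmod (p 0 1 n)) (cmod (q 0 1 n)))^2 * (cmod (p 0 1 n))^2"
      unfolding e1 e2 by (rule b01)
  qed auto
  have L3: "(\<lambda>n. Gapprox c1 c2 n 1 1) \<longlonglongrightarrow> ln (cmod (p 1 1 0 - q 1 1 0)) / d"
    unfolding G
  proof (rule growth[where c="1/2" and K=4 and x="\<lambda>n. p 1 1 n - q 1 1 n"])
    fix n
    have e1: "p 1 1 (Suc n) = ((q 1 1 n)^2 - (p 1 1 n)^2)^2" by (simp add: pS qr[of _ _ n])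
    have e2: "q 1 1 (Suc n) = 4 * p 1 1 n * q 1 1 n * (q 1 1 n - p 1 1 n) * (q 1 1 n - p 1 1 n)"
      by (simp add: qS qr[of _ _ n])
    show "p 1 1 (Suc n) - q 1 1 (Suc n) = (p 1 1 n - q 1 1 n) ^ 4"
      unfolding e1 e2 by (simp add: power2_eq_square power4_eq_xxxx algebra_simps)
    show "0 \<le> max (cmod (p 1 1 n)) (cmod (q 1 1 n))" by (rule order_trans[OF norm_ge_zero max.cobounded1])
    show "1/2 * cmod (p 1 1 n - q 1 1 n) \<le> max (cmod (p 1 1 n)) (cmod (q 1 1 n))" by (rule b11low)
    show "max (cmod (p 1 1 (Suc n))) (cmod (q 1 1 (Suc n)))
        \<le> 4 * (max (cmod (p 1 1 n)) (cmod (q 1 1 n)))^2 * (cmod (p 1 1 n - q 1 1 n))^2"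
      unfolding e1 e2 by (rule b11)
  qed auto
  show ?thesis using L1 L2 L3 by (simp add: p_def q_def d_def)
qed

end
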